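(* Let $\mathcal{P}\subset K[x_1,\ldots,x_n]$ be a chordal polynomial set with $x_1<\cdots<x_n$ as a perfect elimination ordering. Let $\overline{\mathrm{red}}_n(\mathcal{P}),\ldots,\overline{\mathrm{red}}_1(\mathcal{P})$ be any successive reduction of $\mathcal{P}$, with arbitrary valid reduction data at each step. Then $G(\overline{\mathrm{red}}_i(\mathcal{P}))\subseteq G(\mathcal{P})$ for every $i=n,\ldots,1$.
   Context: Let $K$ be a field and $K[x_1,\ldots,x_n]$ the polynomial ring, with the variables ordered $x_1<\cdots<x_n$. For a polynomial $F$, $\mathrm{supp}(F)$ is the set of variables effectively appearing in $F$. For a set of polynomials $\mathcal{P}$, $\mathrm{supp}(\mathcal{P})=\bigcup_{F\in\mathcal{P}}\mathrm{supp}(F)$. For a nonconstant $F$, $\mathrm{lv}(F)$ is the greatest variable in $\mathrm{supp}(F)$. For a polynomial set $\mathcal{P}$ and $1\le i\le n$, $\mathcal{P}^{(i)}=\{P\in\mathcal{P}:\mathrm{lv}(P)=x_i\}$; constants belong to no $\mathcal{P}^{(i)}$. The associated graph $G(\mathcal{P})$ is the undirected graph whose vertex set is $\mathrm{supp}(\mathcal{P})$, with an edge between distinct $x_i,x_j$ iff some $F\in\mathcal{P}$ has $x_i,x_j\in\mathrm{supp}(F)$. For graphs, $G\subseteq G'$ means that $G$ is a subgraph of $G'$, i.e. both the vertex set and the edge set are contained. An ordering of the vertices of a graph is a perfect elimination ordering if, for every vertex $v$, the set consisting of $v$ and all neighbours of $v$ smaller than $v$ is a clique. A polynomial set $\mathcal{P}$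 is called chordal with $x_1<\cdots<x_n$ as a perfect elimination ordering if the restriction of this ordering to $\mathrm{supp}(\mathcal{P})$ is a perfect elimination ordering of $G(\mathcal{P})$. Reduction step: let $\mathcal{S}$ be a polynomial set and $1\le i\le n$ with $\mathcal{S}^{(i)}\neq\emptyset$. Reduction data for $(\mathcal{S},i)$ is a pair $(T_i,\mathcal{R}_i)$ such that: - $T_i\in K[x_1,\ldots,x_i]\setminus K[x_1,\ldots,x_{i-1}]$ and $\mathcal{R}_i\subset K[x_1,\ldots,x_{i-1}]$, where $K[x_1,\ldots,x_0]=K$; - $\mathrm{supp}(T_i)\subseteq\mathrm{supp}(\mathcal{S}^{(i)})$ and $\mathrm{supp}(\mathcal{R}_i)\subseteq\mathrm{supp}(\mathcal{S}^{(i)})$. Given such a pair, $$\mathrm{red}_i(\mathcal{S})=\bigcup_{j>i}\mathcal{S}^{(j)}\ \cup\ \{T_i\}\ \cup\ \bigcup_{j<i}\big(\mathcal{S}^{(j)}\cup\mathcal{R}_i^{(j)}\big).$$ If $\mathcal{S}^{(i)}=\emptyset$, set $\mathrm{red}_i(\mathcal{S})=\bigcup_{j}\mathcal{S}^{(j)}$. Successive reduction: $\overline{\mathrm{red}}_{n+1}(\mathcal{P})=\mathcal{P}$ and $\overline{\mathrm{red}}_i(\mathcal{P})=\mathrm{red}_i(\overline{\mathrm{red}}_{i+1}(\mathcal{P}))$ for $i=n,\ldots,1$. At each step some reduction data for $(\overline{\mathrm{red}}_{i+1}(\mathcal{P}),i)$ is chosen. *)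

theory Defs
  imports "HOL-Library.Poly_Mapping"
begin

text \<open>Multivariate polynomials over a field K in variables x_1, x_2, ...:
  a polynomial is a finitely supported map from monomials (exponent vectors
  nat =>0 nat, variable x_i has index i) to coefficients.
  K[x_1..x_n] consists of those polynomials whose variables lie in {1..n}.\<close>

type_synonym 'a mpoly = "(nat \<Rightarrow>\<^sub>0 nat) \<Rightarrow>\<^sub>0 'a"

definition vars :: "'a::zero mpoly \<Rightarrow> nat set" where
  "vars F = (\<Union>m\<in>Poly_Mapping.keys F. Poly_Mapping.keys m)"

definition supp_set :: "'a::zero mpoly set \<Rightarrow> nat set" where
  "supp_set P = (\<Union>F\<in>P. vars F)"

text \<open>Leading variable (index of the greatest variable), for nonconstant F.\<close>
definition lv :: "'a::zero mpoly \<Rightarrow> nat" where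
  "lv F = Max (vars F)"

definition level :: "'a::zero mpoly set \<Rightarrow> nat \<Rightarrow> 'a mpoly set" where
  "level P i = {F \<in> P. vars F \<noteq> {} \<and> lv F = i}"

text \<open>Undirected graphs as (vertex set, symmetric edge relation).\<close>
definition assoc_graph :: "'a::zero mpoly set \<Rightarrow> nat set \<times> (nat \<times> nat) set" where
  "assoc_graph P = (supp_set P,
     {(a, b). a \<noteq> b \<and> (\<exists>F\<in>P. a \<in> vars F \<and> b \<in> vars F)})"

definition subgraph :: "'v set \<times> ('v \<times> 'v) set \<Rightarrow> 'v set \<times> ('v \<times> 'v) set \<Rightarrow> bool" where
  "subgraph G G' \<longleftrightarrow> fst G \<subseteq> fst G' \<and> snd G \<subseteq> snd G'"

text \<open>The natural order on the vertices is a perfect elimination ordering: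
  for every vertex v, v together with its smaller neighbours forms a clique.\<close>
definition perfect_elim_nat :: "nat set \<times> (nat \<times> nat) set \<Rightarrow> bool" where
  "perfect_elim_nat G \<longleftrightarrow>
     (\<forall>v\<in>fst G. \<forall>a\<in>insert v {u \<in> fst G. u < v \<and> (u, v) \<in> snd G}.
        \<forall>b\<in>insert v {u \<in> fst G. u < v \<and> (u, v) \<in> snd G}. a \<noteq> b \<longrightarrow> (a, b) \<in> snd G)"

definition chordal :: "'a::zero mpoly set \<Rightarrow> bool" where
  "chordal P \<longleftrightarrow> perfect_elim_nat (assoc_graph P)"

definition reduction_data :: "'a::zero mpoly set \<Rightarrow> nat \<Rightarrow> 'a mpoly \<Rightarrow> 'a mpoly set \<Rightarrow> bool" where
  "reduction_data S i T R \<longleftrightarrow>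
     vars T \<subseteq> {1..i} \<and> \<not> vars T \<subseteq> {1..<i} \<and>
     (\<forall>F\<in>R. vars F \<subseteq> {1..<i}) \<and>
     vars T \<subseteq> supp_set (level S i) \<and> supp_set R \<subseteq> supp_set (level S i)"

definition red :: "nat \<Rightarrow> 'a::zero mpoly set \<Rightarrow> nat \<Rightarrow> 'a mpoly \<Rightarrow> 'a mpoly set \<Rightarrow> 'a mpoly set" where
  "red n S i T R =
     (if level S i = {} then (\<Union>j\<in>{1..n}. level S j)
      else (\<Union>j\<in>{i<..n}. level S j) \<union> {T} \<union> (\<Union>j\<in>{1..<i}. level S j \<union> level R j))"

definition successive_reduction :: "nat \<Rightarrow> 'a::zero mpoly set \<Rightarrow> (nat \<Rightarrow> 'a mpoly set) \<Rightarrow> bool" where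
  "successive_reduction n P Q \<longleftrightarrow>
     Q (n + 1) = P \<and>
     (\<forall>i\<in>{1..n}.
        (level (Q (i + 1)) i = {} \<and> Q i = (\<Union>j\<in>{1..n}. level (Q (i + 1)) j)) \<or>
        (level (Q (i + 1)) i \<noteq> {} \<and>
         (\<exists>T R. reduction_data (Q (i + 1)) i T R \<and> Q i = red n (Q (i + 1)) i T R)))"

end

theory Submission
  imports Defs
begin

lemma sub_lemma:
  assumes "subgraph (assoc_graph S) G"
    and "Q' \<subseteq> S \<union> X"
    and "\<forall>F\<in>X. vars F \<subseteq> C"
    and "C \<subseteq> fst G"
    and "\<forall>a\<in>C. \<forall>b\<in>C. a \<noteq> b \<longrightarrow> (a, b) \<in> snd G"
  shows "subgraph (assoc_graph Q') G"
proof -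
  have v: "vars F \<subseteq> fst G \<and> (\<forall>a\<in>vars F. \<forall>b\<in>vars F. a \<noteq> b \<longrightarrow> (a, b) \<in> snd G)" if "F \<in> Q'" for F
  proof (cases "F \<in> S")
    case True
    have "vars F \<subseteq> fst G" using True assms(1) unfolding subgraph_def assoc_graph_def supp_set_def by auto
    moreover have "\<forall>a\<in>vars F. \<forall>b\<in>vars F. a \<noteq> b \<longrightarrow> (a, b) \<in> snd G"
      using True assms(1) unfolding subgraph_def assoc_graph_def by auto
    ultimately show ?thesis by blast
  next
    case False
    hence "vars F \<subseteq> C" using that assms(2,3) by blast
    then show ?thesis using assms(4,5) by blast
  qed
  show ?thesis unfolding subgraph_def assoc_graph_def supp_set_def
  proof (intro conjI subsetI)
    fix x assume "x \<in> fst (\<Union>F\<in>Q'. vars F, {(a, b). a \<noteq> b \<and> (\<exists>F\<in>Q'. a \<in> vars F \<and> b \<in> vars F)})"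
    then obtain F where "F \<in> Q'" "x \<in> vars F" by auto
    thus "x \<in> fst G" using v by blast
  next
    fix x assume "x \<in> snd (\<Union>F\<in>Q'. vars F, {(a, b). a \<noteq> b \<and> (\<exists>F\<in>Q'. a \<in> vars F \<and> b \<in> vars F)})"
    then obtain a b F where "x = (a,b)" "a \<noteq> b" "F \<in> Q'" "a \<in> vars F" "b \<in> vars F" by auto
    thus "x \<in> snd G" using v by blast
  qed
qed

lemma level_sub:
  assumes "subgraph (assoc_graph S) G" and "F \<in> level S i"
  shows "vars F \<subseteq> insert i {u \<in> fst G. u < i \<and> (u, i) \<in> snd G}" and "i \<in> fst G"
proof -
  have F: "F \<in> S" "vars F \<noteq> {}" "Max (vars F) = i"
    using assms(2) unfolding level_def lv_def by auto
  have fin: "finite (vars F)" unfolding vars_def by auto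
  have iin: "i \<in> vars F" using F fin Max_in by blast
  show "i \<in> fst G" using assms(1) F iin
    unfolding subgraph_def assoc_graph_def supp_set_def by auto
  show "vars F \<subseteq> insert i {u \<in> fst G. u < i \<and> (u, i) \<in> snd G}"
  proof
    fix u assume u: "u \<in> vars F"
    show "u \<in> insert i {u \<in> fst G. u < i \<and> (u, i) \<in> snd G}"
    proof (cases "u = i")
      case False
      have "u \<le> i" using u fin F Max_ge by metis
      hence "u < i" using False by simp
      moreover have "u \<in> fst G" using assms(1) F u
        unfolding subgraph_def assoc_graph_def supp_set_def by auto
      moreover have "(u, i) \<in> snd G" using assms(1) F u iin False
        unfolding subgraph_def assoc_graph_def by auto
      ultimately show ?thesis by simp
    qed simp
  qed
qed

lemma step:
  assumes ch: "chordal P"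
    and sg: "subgraph (assoc_graph S) (assoc_graph P)"
    and ne: "level S i \<noteq> {}"
    and rd: "reduction_data S i T R"
  shows "subgraph (assoc_graph (red n S i T R)) (assoc_graph P)"
proof -
  let ?G = "assoc_graph P"
  let ?C = "insert i {u \<in> fst ?G. u < i \<and> (u, i) \<in> snd ?G}"
  obtain F where F: "F \<in> level S i" using ne by auto
  have iG: "i \<in> fst ?G" using level_sub(2)[OF sg F] .
  have Csub: "?C \<subseteq> fst ?G" using iG by auto
  have cl: "\<forall>a\<in>?C. \<forall>b\<in>?C. a \<noteq> b \<longrightarrow> (a, b) \<in> snd ?G"
    using ch iG unfolding chordal_def perfect_elim_nat_def by blast
  have supp: "supp_set (level S i) \<subseteq> ?C"
    using level_sub(1)[OF sg] unfolding supp_set_def by blast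
  let ?X = "insert T R"
  have X: "\<forall>F\<in>?X. vars F \<subseteq> ?C"
    using rd supp unfolding reduction_data_def supp_set_def by blast
  have "red n S i T R \<subseteq> S \<union> ?X"
    using ne unfolding red_def level_def by auto
  thus ?thesis using sub_lemma[OF sg _ X Csub cl] by blast
qed

theorem theorem3p5:
  fixes P :: "'a::field mpoly set" and n :: nat and Q :: "nat \<Rightarrow> 'a mpoly set"
  assumes "\<forall>F\<in>P. vars F \<subseteq> {1..n}"
    and "chordal P"
    and "successive_reduction n P Q"
  shows "\<forall>i\<in>{1..n}. subgraph (assoc_graph (Q i)) (assoc_graph P)"
proof -
  have Q0: "Q (n+1) = P" and QS: "\<forall>i\<in>{1..n}.
        (level (Q (i + 1)) i = {} \<and> Q i = (\<Union>j\<in>{1..n}. level (Q (i + 1)) j)) \<or>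
        (level (Q (i + 1)) i \<noteq> {} \<and>
         (\<exists>T R. reduction_data (Q (i + 1)) i T R \<and> Q i = red n (Q (i + 1)) i T R))"
    using assms(3) unfolding successive_reduction_def by auto
  have main: "k \<le> n \<Longrightarrow> subgraph (assoc_graph (Q (n + 1 - k))) (assoc_graph P)" for k
  proof (induction k)
    case 0
    then show ?case using Q0 unfolding subgraph_def by simp
  next
    case (Suc k)
    define i where "i = n - k"
    have i1: "i \<in> {1..n}" "n + 1 - k = i + 1" "n + 1 - Suc k = i" using Suc.prems unfolding i_def by auto
    have IH: "subgraph (assoc_graph (Q (i + 1))) (assoc_graph P)"
      using Suc i1 by simp
    have D: "(level (Q (i + 1)) i = {} \<and> Q i = (\<Union>j\<in>{1..n}. level (Q (i + 1)) j)) \<or>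
        (level (Q (i + 1)) i \<noteq> {} \<and>
         (\<exists>T R. reduction_data (Q (i + 1)) i T R \<and> Q i = red n (Q (i + 1)) i T R))"
      using QS i1(1) by blast
    have "subgraph (assoc_graph (Q i)) (assoc_graph P)"
    using D
    proof (elim disjE)
      assume a: "level (Q (i + 1)) i = {} \<and> Q i = (\<Union>j\<in>{1..n}. level (Q (i + 1)) j)"
      have "Q i \<subseteq> Q (i+1)" using a unfolding level_def by auto
      thus ?thesis using sub_lemma[OF IH, of "Q i" "{}" "{}"] by auto
    next
      assume "level (Q (i + 1)) i \<noteq> {} \<and>
         (\<exists>T R. reduction_data (Q (i + 1)) i T R \<and> Q i = red n (Q (i + 1)) i T R)"
      then obtain T R where "level (Q (i + 1)) i \<noteq> {}" "reduction_data (Q (i + 1)) i T R" "Q i = red n (Q (i + 1)) i T R" by blast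
      thus ?thesis using step[OF assms(2) IH, of i T R n] by simp
    qed
    thus ?case using i1(3) by simp
  qed
  show ?thesis
  proof
    fix i assume "i \<in> {1..n}"
    hence "n - i \<le> n" "n + 1 - (n - i) = i + 1 - 0" by auto
    have "subgraph (assoc_graph (Q (n + 1 - (n - (i - 1) )))) (assoc_graph P)"
      using main[of "n - (i - 1)"] \<open>i \<in> {1..n}\<close> by auto
    thus "subgraph (assoc_graph (Q i)) (assoc_graph P)" using \<open>i \<in> {1..n}\<close> by simp
  qed
qed

end
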